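(* Let $V$ be a finite set and $\mu\colon\binom V2\to\mathbb{Z}_+$. If there is a vertex $v\in V$ such that $\mu(e)=1$ for every edge $e\in\binom V2$ containing $v$, then $(\Delta_V)_\mu$ is contractible.
   Context: $(\Delta_V)_\mu$ is the edge inflation of the full simplex on $V$: the poset of pairs $(I,c_I)$ with $\varnothing\neq I\subseteq V$ and $c_I\colon\binom I2\to\mathbb{Z}_+$, $c_I(e)\in\{1,\dots,\mu(e)\}$, ordered by $(I,c_I)<(J,c_J)$ iff $I\subsetneq J$ and $c_I=c_J|_{\binom I2}$; topology refers to the realization of its order complex. *)

theory Defs
  imports "HOL-Analysis.Analysis"
begin

definition edges2 :: "'v set \<Rightarrow> 'v set set" where
  "edges2 I = {e. e \<subseteq> I \<and> card e = 2}"

text \<open>Elements of the edge inflation: pairs (I, c) with I a nonempty subset of V and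
  c a labelling of the 2-subsets of I with c(e) in {1..mu(e)}; c is taken to be 0
  outside the 2-subsets of I so that c is literally a function on binom(I,2).\<close>
definition inflation_elems :: "'v set \<Rightarrow> ('v set \<Rightarrow> nat) \<Rightarrow> ('v set \<times> ('v set \<Rightarrow> nat)) set" where
  "inflation_elems V \<mu> = {(I, c). I \<noteq> {} \<and> I \<subseteq> V \<and>
      (\<forall>e \<in> edges2 I. 1 \<le> c e \<and> c e \<le> \<mu> e) \<and> (\<forall>e. e \<notin> edges2 I \<longrightarrow> c e = 0)}"

definition inflation_less :: "('v set \<times> ('v set \<Rightarrow> nat)) \<Rightarrow> ('v set \<times> ('v set \<Rightarrow> nat)) \<Rightarrow> bool" where
  "inflation_less p q \<longleftrightarrow> fst p \<subset> fst q \<and> (\<forall>e \<in> edges2 (fst p). snd p e = snd q e)"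

text \<open>Geometric realization of the order complex of a finite strict poset (P, lt):
  convex combinations (barycentric coordinates) of elements of P whose support is a chain,
  viewed as a subset of the function space 'a \<Rightarrow> real (product topology).\<close>
definition order_complex_realization :: "'a set \<Rightarrow> ('a \<Rightarrow> 'a \<Rightarrow> bool) \<Rightarrow> ('a \<Rightarrow> real) set" where
  "order_complex_realization P lt = {x. (\<forall>p. 0 \<le> x p) \<and> (\<forall>p. p \<notin> P \<longrightarrow> x p = 0) \<and>
      sum x P = 1 \<and>
      (\<forall>p q. 0 < x p \<and> 0 < x q \<and> p \<noteq> q \<longrightarrow> lt p q \<or> lt q p)}"

definition edge_inflation_realization :: "'v set \<Rightarrow> ('v set \<Rightarrow> nat) \<Rightarrow> (('v set \<times> ('v set \<Rightarrow> nat)) \<Rightarrow> real) set" where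
  "edge_inflation_realization V \<mu> = order_complex_realization (inflation_elems V \<mu>) inflation_less"

end

theory Submission
  imports Defs
begin

lemma hw_canon:
  assumes "continuous_on ({0..1::real} \<times> S) h" "h ` ({0..1} \<times> S) \<subseteq> T"
    "\<And>x. x \<in> S \<Longrightarrow> h(0,x) = f x" "\<And>x. x \<in> S \<Longrightarrow> h(1,x) = g x"
  shows "homotopic_with_canon (\<lambda>x. True) S T f g"
  apply (subst homotopic_with)
   apply simp
  using assms by (auto intro!: exI[of _ h] simp: continuous_map_subtopology_eu subtopology_Times[symmetric])

lemma cproj [continuous_intros]: "continuous_on A (\<lambda>z::'c::topological_space \<times> ('a \<Rightarrow> real). snd z p)"
  by (rule continuous_on_compose2[OF continuous_on_product_coordinates continuous_on_snd]) auto

lemma general_contractible: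
  fixes P :: "'a set" and lt :: "'a \<Rightarrow> 'a \<Rightarrow> bool" and f :: "'a \<Rightarrow> 'a" and w :: 'a
  assumes fin: "finite P" and tr: "\<And>p q r. lt p q \<Longrightarrow> lt q r \<Longrightarrow> lt p r" and irr: "\<And>p. \<not> lt p p"
    and fP: "\<And>p. p \<in> P \<Longrightarrow> f p \<in> P" and incr: "\<And>p. p \<in> P \<Longrightarrow> p = f p \<or> lt p (f p)"
    and mono: "\<And>p q. p \<in> P \<Longrightarrow> q \<in> P \<Longrightarrow> lt p q \<Longrightarrow> f p = f q \<or> lt (f p) (f q)"
    and wP: "w \<in> P" and wle: "\<And>p. p \<in> P \<Longrightarrow> w = f p \<or> lt w (f p)"
  shows "contractible (order_complex_realization P lt)"
proof -
  define S where "S = order_complex_realization P lt"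
  have memS: "x \<in> S \<longleftrightarrow> (\<forall>p. 0 \<le> x p) \<and> (\<forall>p. p \<notin> P \<longrightarrow> x p = 0) \<and> sum x P = 1 \<and>
      (\<forall>p q. 0 < x p \<and> 0 < x q \<and> p \<noteq> q \<longrightarrow> lt p q \<or> lt q p)" for x
    unfolding S_def order_complex_realization_def by simp
  define L where "L x p = (\<Sum>q\<in>{q\<in>P. lt q p}. x q)" for x :: "'a \<Rightarrow> real" and p
  define st where "st z p = max 0 (min (snd z p) (1 - fst z - L (snd z) p))" for z :: "real \<times> ('a \<Rightarrow> real)" and p
  define H where "H z q = st z q + (\<Sum>p\<in>{p\<in>P. f p = q}. snd z p - st z p)" for z q
  define F where "F x = H (1,x)" for x
  define K where "K z q = (1 - fst z) * F (snd z) q + fst z * (if q = w then 1 else 0)" for z :: "real \<times> ('a \<Rightarrow> real)" and q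
  have Lnn: "x \<in> S \<Longrightarrow> 0 \<le> L x p" for x p
    unfolding L_def by (rule sum_nonneg) (auto simp: memS)
  have Lmono: "L x p' + x p' \<le> L x p" if "x \<in> S" "lt p' p" for x p p'
  proof (cases "p' \<in> P")
    case True
    have "L x p' + x p' = sum x (insert p' {q\<in>P. lt q p'})"
      unfolding L_def using fin irr by (subst sum.insert) auto
    also have "\<dots> \<le> L x p"
      unfolding L_def using fin that True tr by (intro sum_mono2) (auto simp: memS)
    finally show ?thesis .
  next
    case False
    then have "x p' = 0" using that by (auto simp: memS)
    moreover have "L x p' \<le> L x p"
      unfolding L_def using fin that tr by (intro sum_mono2) (auto simp: memS)
    ultimately show ?thesis by simp
  qed
  have Lle: "L x p + x p \<le> 1" if "x \<in> S" for x p
  proof (cases "p \<in> P")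
    case True
    have "L x p + x p = sum x (insert p {q\<in>P. lt q p})"
      unfolding L_def using fin irr by (subst sum.insert) auto
    also have "\<dots> \<le> sum x P"
      using fin that True by (intro sum_mono2) (auto simp: memS)
    finally show ?thesis using that by (simp add: memS)
  next
    case False
    then have "x p = 0" using that by (auto simp: memS)
    moreover have "L x p \<le> sum x P"
      unfolding L_def using fin that by (intro sum_mono2) (auto simp: memS)
    ultimately show ?thesis using that by (simp add: memS)
  qed
  have key: "p = p' \<or> lt p p'" if "x \<in> S" "0 < st (t,x) p" "0 < x p' - st (t,x) p'" for x t p p'
  proof (rule ccontr)
    assume a: "\<not> (p = p' \<or> lt p p')"
    have xp: "0 < x p" "1 - t - L x p > 0" using that(2) by (auto simp: st_def)
    have xp': "0 < x p'" "1 - t - L x p' < x p'" using that(1,3) by (auto simp: st_def memS)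
    have "lt p' p" using a xp xp' that(1) by (auto simp: memS)
    then have "L x p' + x p' \<le> L x p" using Lmono that(1) by blast
    then show False using xp xp' by linarith
  qed
  have stnn: "0 \<le> st z p" for z p by (simp add: st_def)
  have stle: "x \<in> S \<Longrightarrow> st (t,x) p \<le> x p" for x t p by (auto simp: st_def memS)
  have H0: "H (0,x) = x" if "x \<in> S" for x
  proof
    fix q
    have "st (0,x) p = x p" for p using Lle[OF that, of p] that by (auto simp: st_def memS)
    then show "H (0,x) q = x q" by (simp add: H_def)
  qed
  have st1: "x \<in> S \<Longrightarrow> st (1,x) p = 0" for x p using Lnn[of x p] by (auto simp: st_def memS)
  have HS: "H (t,x) \<in> S" if "x \<in> S" "t \<in> {0..1}" for x t
  proof -
    have nn: "0 \<le> H (t,x) q" for q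
      unfolding H_def using stnn stle that by (auto intro!: add_nonneg_nonneg sum_nonneg)
    have out: "H (t,x) q = 0" if "q \<notin> P" for q
    proof -
      have "x q = 0" using that \<open>x \<in> S\<close> by (auto simp: memS)
      then have "st (t,x) q = 0" by (simp add: st_def)
      moreover have "{p\<in>P. f p = q} = {}" using fP that by auto
      ultimately show ?thesis unfolding H_def by (metis (no_types, lifting) add_0 sum.empty)
    qed
    have "sum (H (t,x)) P = sum (st (t,x)) P + (\<Sum>q\<in>P. \<Sum>p\<in>{p\<in>P. f p = q}. x p - st (t,x) p)"
      by (simp add: H_def sum.distrib)
    also have "(\<Sum>q\<in>P. \<Sum>p\<in>{p\<in>P. f p = q}. x p - st (t,x) p) = (\<Sum>p\<in>P. x p - st (t,x) p)"
      using fin fP by (intro sum.group) auto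
    finally have "sum (H (t,x)) P = sum x P" by (simp add: sum_subtractf)
    then have s1: "sum (H (t,x)) P = 1" using that by (simp add: memS)
    have pos: "st (t,x) q > 0 \<or> (\<exists>p\<in>P. f p = q \<and> x p - st (t,x) p > 0)" if "H (t,x) q > 0" for q
    proof (rule ccontr)
      assume "\<not> ?thesis"
      then have "st (t,x) q \<le> 0" "\<forall>p\<in>{p\<in>P. f p = q}. x p - st (t,x) p \<le> 0" by auto
      moreover have "(\<Sum>p\<in>{p\<in>P. f p = q}. x p - st (t,x) p) \<le> 0"
        using calculation(2) by (intro sum_nonpos) blast
      ultimately have "H (t,x) q \<le> 0" unfolding H_def snd_conv by linarith
      then show False using that by simp
    qed
    have chain: "lt q1 q2 \<or> lt q2 q1" if "H (t,x) q1 > 0" "H (t,x) q2 > 0" "q1 \<noteq> q2" for q1 q2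
    proof -
      have c1: "lt a (f b) \<or> lt (f b) a" if "st (t,x) a > 0" "x b - st (t,x) b > 0" "b \<in> P" "a \<noteq> f b" for a b
      proof -
        have "a = b \<or> lt a b" using key[OF \<open>x \<in> S\<close>] that by blast
        then have "lt a (f b)" using incr[OF that(3)] that(4) tr by metis
        then show ?thesis by simp
      qed
      have stpos: "x p > 0" if "st (t,x) p > 0" for p using that by (auto simp: st_def)
      have mpos: "x p > 0" if "x p - st (t,x) p > 0" for p using that stnn[of "(t,x)" p] by linarith
      show ?thesis
        using pos[OF that(1)] pos[OF that(2)]
      proof (elim disjE bexE conjE)
        assume "st (t,x) q1 > 0" "st (t,x) q2 > 0"
        then show ?thesis using stpos \<open>x \<in> S\<close> that(3) by (auto simp: memS)
      next
        fix p assume "st (t,x) q1 > 0" "p \<in> P" "f p = q2" "x p - st (t,x) p > 0"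
        then show ?thesis using c1 that(3) by blast
      next
        fix p assume "st (t,x) q2 > 0" "p \<in> P" "f p = q1" "x p - st (t,x) p > 0"
        then show ?thesis using c1 that(3) by blast
      next
        fix p p' assume a: "p \<in> P" "f p = q1" "x p - st (t,x) p > 0" "p' \<in> P" "f p' = q2" "x p' - st (t,x) p' > 0"
        then have "p \<noteq> p'" using that(3) by auto
        then have "lt p p' \<or> lt p' p" using mpos a \<open>x \<in> S\<close> by (auto simp: memS)
        then show ?thesis using mono a that(3) by metis
      qed
    qed
    show ?thesis using nn out s1 chain by (auto simp: memS)
  qed
  have contH: "continuous_on UNIV H"
  proof (rule continuous_on_coordinatewise_then_product)
    fix q
    show "continuous_on UNIV (\<lambda>z. H z q)"
      unfolding H_def st_def L_def by (intro continuous_intros)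
  qed
  have FS: "x \<in> S \<Longrightarrow> F x \<in> S" for x using HS[of x 1] by (simp add: F_def)
  have Fpos: "\<exists>p\<in>P. f p = q" if "x \<in> S" "F x q > 0" for x q
  proof (rule ccontr)
    assume "\<not> ?thesis"
    then have e: "{p\<in>P. f p = q} = {}" by auto
    have "F x q = 0" unfolding F_def H_def e using st1[OF that(1)] by simp
    then show False using that(2) by simp
  qed
  have h1: "homotopic_with_canon (\<lambda>x. True) S S id F"
  proof (rule hw_canon[where h = H])
    show "continuous_on ({0..1} \<times> S) H" using contH by (rule continuous_on_subset) auto
    show "H ` ({0..1} \<times> S) \<subseteq> S" using HS by auto
  qed (auto simp: H0 F_def)
  define d where "d = (\<lambda>q. if q = w then 1 else (0::real))"
  have dS: "d \<in> S"
    using fin wP unfolding memS d_def by (auto simp: sum.delta)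
  have h2: "homotopic_with_canon (\<lambda>x. True) S S F (\<lambda>x. d)"
  proof (rule hw_canon[where h = K])
    have "continuous_on UNIV (\<lambda>z. K z q)" for q
    proof -
      have "continuous_on UNIV (\<lambda>z::real \<times> ('a \<Rightarrow> real). H (1, snd z) q)"
        by (rule continuous_on_compose2[OF continuous_on_product_then_coordinatewise[OF contH]])
           (auto intro!: continuous_intros)
      then show ?thesis unfolding K_def F_def by (intro continuous_intros)
    qed
    then have "continuous_on UNIV K" by (rule continuous_on_coordinatewise_then_product)
    then show "continuous_on ({0..1} \<times> S) K" by (rule continuous_on_subset) auto
    show "K ` ({0..1} \<times> S) \<subseteq> S"
    proof clarify
      fix t x assume t: "t \<in> {0..1::real}" and x: "x \<in> S"
      have y: "F x \<in> S" using FS x .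
      have nn: "0 \<le> K (t,x) q" for q using t y by (auto simp: K_def memS)
      have out: "K (t,x) q = 0" if "q \<notin> P" for q using t y that wP by (auto simp: K_def memS)
      have "sum (K (t,x)) P = (1 - t) * sum (F x) P + t * sum d P"
        by (simp add: K_def sum.distrib sum_distrib_left d_def)
      also have "\<dots> = 1" using y dS by (simp add: memS)
      finally have s1: "sum (K (t,x)) P = 1" .
      have pos: "q = w \<or> F x q > 0" if "K (t,x) q > 0" for q
      proof (cases "q = w")
        case False
        then have "0 < (1-t) * F x q" using that by (simp add: K_def)
        have "0 < F x q"
        proof (rule ccontr)
          assume "\<not> 0 < F x q"
          moreover have "0 \<le> F x q" using y by (simp add: memS)
          ultimately have "F x q = 0" by linarith
          then show False using \<open>0 < (1-t) * F x q\<close> by simp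
        qed
        then show ?thesis by simp
      qed simp
      have chain: "lt q1 q2 \<or> lt q2 q1" if "K (t,x) q1 > 0" "K (t,x) q2 > 0" "q1 \<noteq> q2" for q1 q2
        using pos[OF that(1)] pos[OF that(2)]
      proof (elim disjE)
        assume "F x q1 > 0" "F x q2 > 0"
        moreover have "\<forall>p q. 0 < F x p \<and> 0 < F x q \<and> p \<noteq> q \<longrightarrow> lt p q \<or> lt q p"
          using y unfolding memS by blast
        ultimately show ?thesis using that(3) by blast
      next
        assume "q1 = w" "F x q2 > 0" then show ?thesis using Fpos[OF x] wle that(3) by blast
      next
        assume "q2 = w" "F x q1 > 0" then show ?thesis using Fpos[OF x] wle that(3) by blast
      qed (use that in auto)
      show "K (t,x) \<in> S" using nn out s1 chain by (auto simp: memS)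
    qed
  qed (auto simp: K_def d_def)
  have "homotopic_with_canon (\<lambda>x. True) S S id (\<lambda>x. d)"
    using h1 h2 by (rule homotopic_with_trans)
  then show ?thesis unfolding contractible_def S_def by blast
qed

lemma edges2_single: "edges2 {v} = {}"
proof -
  { fix e :: "'a set" assume a: "e \<subseteq> {v}" "card e = 2"
    have "card e \<le> card {v}" using a(1) by (intro card_mono) auto
    with a(2) have False by simp }
  then show ?thesis unfolding edges2_def by blast
qed

theorem corollary4p10:
  fixes V :: "'v set" and \<mu> :: "'v set \<Rightarrow> nat" and v :: 'v
  assumes "finite V"
    and "\<forall>e \<in> edges2 V. 1 \<le> \<mu> e"
    and "v \<in> V"
    and "\<forall>e \<in> edges2 V. v \<in> e \<longrightarrow> \<mu> e = 1"
  shows "contractible (edge_inflation_realization V \<mu>)"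
proof -
  define P where "P = inflation_elems V \<mu>"
  define f where "f p = (insert v (fst p), \<lambda>e. if e \<in> edges2 (insert v (fst p)) then (if v \<in> e then 1 else snd p e) else 0)"
    for p :: "'v set \<times> ('v set \<Rightarrow> nat)"
  define w where "w = ({v}, \<lambda>e::'v set. 0::nat)"
  have memP: "(I,c) \<in> P \<longleftrightarrow> I \<noteq> {} \<and> I \<subseteq> V \<and>
      (\<forall>e \<in> edges2 I. 1 \<le> c e \<and> c e \<le> \<mu> e) \<and> (\<forall>e. e \<notin> edges2 I \<longrightarrow> c e = 0)" for I c
    unfolding P_def inflation_elems_def by simp
  have e2mono: "I \<subseteq> J \<Longrightarrow> edges2 I \<subseteq> edges2 J" for I J unfolding edges2_def by auto
  have e2sub: "e \<in> edges2 (insert v I) \<Longrightarrow> v \<notin> e \<Longrightarrow> e \<in> edges2 I" for e I unfolding edges2_def by auto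
  have cv: "c e = 1" if "(I,c) \<in> P" "e \<in> edges2 I" "v \<in> e" for I c e
  proof -
    have "e \<in> edges2 V" using that e2mono[of I V] by (auto simp: memP)
    then show ?thesis using that assms(4) by (force simp: memP)
  qed
  have finP: "finite P"
  proof -
    have Psub: "P \<subseteq> Pow V \<times> {c. \<forall>e. (e \<notin> edges2 V \<longrightarrow> c e = 0) \<and> c e \<le> \<mu> e}"
    proof
      fix p assume "p \<in> P"
      obtain I c where p: "p = (I,c)" by fastforce
      have "(I,c) \<in> P" using \<open>p \<in> P\<close> p by simp
      then have I: "I \<subseteq> V" "\<forall>e \<in> edges2 I. 1 \<le> c e \<and> c e \<le> \<mu> e" "\<forall>e. e \<notin> edges2 I \<longrightarrow> c e = 0"
        unfolding memP by auto
      have "c e = 0" if "e \<notin> edges2 V" for e using that I e2mono[OF I(1)] by auto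
      moreover have "c e \<le> \<mu> e" for e using I by (cases "e \<in> edges2 I") auto
      ultimately show "p \<in> Pow V \<times> {c. \<forall>e. (e \<notin> edges2 V \<longrightarrow> c e = 0) \<and> c e \<le> \<mu> e}"
        using I unfolding p by auto
    qed
    moreover have "finite (edges2 V)" using assms(1) unfolding edges2_def by simp
    moreover have "{c. \<forall>e. (e \<notin> edges2 V \<longrightarrow> c e = 0) \<and> c e \<le> \<mu> e} \<subseteq>
        (\<lambda>g e. if e \<in> edges2 V then g e else 0) ` (PiE (edges2 V) (\<lambda>e. {0..\<mu> e}))"
    proof
      fix c assume "c \<in> {c. \<forall>e. (e \<notin> edges2 V \<longrightarrow> c e = 0) \<and> c e \<le> \<mu> e}"
      then show "c \<in> (\<lambda>g e. if e \<in> edges2 V then g e else 0) ` (PiE (edges2 V) (\<lambda>e. {0..\<mu> e}))"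
        by (intro image_eqI[where x="restrict c (edges2 V)"]) (auto simp: fun_eq_iff)
    qed
    ultimately have "finite {c. \<forall>e. (e \<notin> edges2 V \<longrightarrow> c e = 0) \<and> c e \<le> \<mu> e}"
      by (meson finite_PiE finite_atLeastAtMost finite_imageI finite_subset)
    with Psub show ?thesis using assms(1) by (meson finite_Pow_iff finite_SigmaI finite_subset)
  qed
  show ?thesis
    unfolding edge_inflation_realization_def P_def[symmetric]
  proof (rule general_contractible[where f = f and w = w])
    show "finite P" by (rule finP)
    show "inflation_less p q \<Longrightarrow> inflation_less q r \<Longrightarrow> inflation_less p r" for p q r
    proof -
      assume a: "inflation_less p q" "inflation_less q r"
      have "fst p \<subset> fst r" using a unfolding inflation_less_def by auto
      moreover have "snd p e = snd r e" if "e \<in> edges2 (fst p)" for e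
      proof -
        have "e \<in> edges2 (fst q)" using that a e2mono[of "fst p" "fst q"] unfolding inflation_less_def by auto
        then show ?thesis using that a unfolding inflation_less_def by auto
      qed
      ultimately show ?thesis unfolding inflation_less_def by auto
    qed
    show "\<not> inflation_less p p" for p unfolding inflation_less_def by simp
    show "w \<in> P" using assms(3) by (simp add: w_def memP edges2_single)
    show "f p \<in> P" if "p \<in> P" for p
    proof -
      obtain I c where p: "p = (I,c)" by fastforce
      have I: "I \<noteq> {}" "I \<subseteq> V" "\<forall>e \<in> edges2 I. 1 \<le> c e \<and> c e \<le> \<mu> e"
        using that unfolding p memP by auto
      have IV: "insert v I \<subseteq> V" using I assms(3) by auto
      have b: "1 \<le> (if v \<in> e then 1 else c e) \<and> (if v \<in> e then 1 else c e) \<le> \<mu> e"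
        if e: "e \<in> edges2 (insert v I)" for e
      proof (cases "v \<in> e")
        case True
        have "e \<in> edges2 V" using e e2mono[OF IV] by auto
        then show ?thesis using True assms(4) by simp
      next
        case False
        then show ?thesis using I(3) e2sub[OF e] by simp
      qed
      show ?thesis unfolding p f_def memP fst_conv snd_conv using IV b by auto
    qed
    show "p = f p \<or> inflation_less p (f p)" if "p \<in> P" for p
    proof -
      obtain I c where p: "p = (I,c)" by fastforce
      show ?thesis
      proof (cases "v \<in> I")
        case True
        have iv: "insert v I = I" using True by auto
        have "(if e \<in> edges2 (insert v I) then (if v \<in> e then 1 else c e) else 0) = c e" for e
        proof (cases "e \<in> edges2 I")
          case True
          then show ?thesis using cv[of I c e] that unfolding p iv by auto
        next
          case False
          then show ?thesis using that unfolding p iv memP by auto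
        qed
        then have "f p = p" unfolding p f_def fst_conv snd_conv iv by auto
        then show ?thesis by simp
      next
        case False
        then show ?thesis unfolding p f_def inflation_less_def edges2_def by auto
      qed
    qed
    show "f p = f q \<or> inflation_less (f p) (f q)" if "p \<in> P" "q \<in> P" "inflation_less p q" for p q
    proof -
      obtain I c where p: "p = (I,c)" by fastforce
      obtain J d where q: "q = (J,d)" by fastforce
      have IJ: "I \<subset> J" and cd: "\<forall>e\<in>edges2 I. c e = d e" using that(3) unfolding p q inflation_less_def by auto
      show ?thesis
      proof (cases "insert v I = insert v J")
        case True
        then show ?thesis unfolding p q f_def using cd e2sub[of _ I] by (auto intro!: ext)
      next
        case False
        then have "insert v I \<subset> insert v J" using IJ by auto
        then show ?thesis unfolding p q f_def inflation_less_def using cd e2sub[of _ I] e2mono[of "insert v I" "insert v J"]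
          by auto
      qed
    qed
    show "w = f p \<or> inflation_less w (f p)" if "p \<in> P" for p
    proof -
      obtain I c where p: "p = (I,c)" by fastforce
      show ?thesis
      proof (cases "insert v I = {v}")
        case True
        then show ?thesis unfolding p f_def w_def fst_conv True edges2_single by simp
      next
        case False
        then show ?thesis unfolding p f_def w_def inflation_less_def by (auto simp: edges2_single)
      qed
    qed
  qed
qed

end
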